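(* Let $q$ be a prime power and $0\le t\le s$. If an invertible $s\times s$ matrix $M$ over $\mathbb{F}_q$ defines a linear $(t,s,q)$-AONT (i.e. every $t\times t$ submatrix of $M$ is invertible), then $M^{-1}$ defines a linear $(s-t,s,q)$-AONT (i.e. every $(s-t)\times(s-t)$ submatrix of $M^{-1}$ is invertible).
   Context: A linear $(t,s,q)$-AONT over $\mathbb{F}_q$ is given by an invertible $s\times s$ matrix $M$ over $\mathbb{F}_q$, the transform being $(y_1,\dots,y_s)=(x_1,\dots,x_s)M^{-1}$; $M$ defines a linear $(t,s,q)$-AONT iff every $t\times t$ submatrix of $M$ is invertible (a $0\times0$ submatrix counts as invertible). *)

theory Defs
  imports "Jordan_Normal_Form.Matrix" "Jordan_Normal_Form.DL_Submatrix"
begin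

text \<open>The field F_q is modelled by a finite field type,
q = CARD('a).\<close>

definition linear_AONT :: "nat \<Rightarrow> nat \<Rightarrow> 'a :: field mat \<Rightarrow> bool" where
  "linear_AONT t s M \<longleftrightarrow> M \<in> carrier_mat s s \<and> invertible_mat M \<and>
     (\<forall>I J. I \<subseteq> {..<s} \<longrightarrow> J \<subseteq> {..<s} \<longrightarrow> card I = t \<longrightarrow> card J = t \<longrightarrow>
        invertible_mat (submatrix M I J))"

end

theory Submission
  imports Defs "Jordan_Normal_Form.Determinant"
begin

lemma det_ne_invertible:
  fixes A :: "'a :: field mat"
  assumes A: "A \<in> carrier_mat n n" and d: "det A \<noteq> 0"
  shows "invertible_mat A"
proof -
  from det_non_zero_imp_unit[OF A d, of "()"]
  obtain B where B: "B \<in> carrier_mat n n" "B * A = 1\<^sub>m n" "A * B = 1\<^sub>m n"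
    unfolding Units_def ring_mat_def by auto
  thus ?thesis using A unfolding invertible_mat_def inverts_mat_def square_mat.simps by auto
qed

lemma bij_pick:
  assumes "finite S"
  shows "bij_betw (pick S) {..<card S} S"
proof -
  have inj: "inj_on (pick S) {..<card S}"
    by (rule inj_onI, metis lessThan_iff nat_neq_iff pick_mono)
  have sub: "pick S ` {..<card S} \<subseteq> S" using pick_in_set by auto
  have "card (pick S ` {..<card S}) = card S" using card_image[OF inj] by simp
  hence "pick S ` {..<card S} = S" using card_subset_eq[OF assms sub] by simp
  thus ?thesis using inj by (simp add: bij_betw_def)
qed

lemma sum_pick:
  assumes "finite S"
  shows "(\<Sum>c<card S. f (pick S c)) = (\<Sum>i\<in>S. f i)"
  using sum.reindex_bij_betw[OF bij_pick[OF assms], of f] by simp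

lemma idx_lt: fixes S :: "nat set" assumes "finite S" "i \<in> S" shows "card {a\<in>S. a < i} < card S"
proof -
  have "{a\<in>S. a < i} \<subseteq> S - {i}" by auto
  hence "card {a\<in>S. a < i} \<le> card (S - {i})" using assms by (intro card_mono) auto
  also have "\<dots> < card S" by (rule card_Diff1_less[OF assms])
  finally show ?thesis .
qed

lemma sub_card: assumes "I \<subseteq> {..<s}" shows "card {i. i < s \<and> i \<in> I} = card I"
  using assms by (metis (no_types, lifting) Collect_cong Collect_mem_eq lessThan_iff subset_iff)

lemma key:
  fixes M N :: "'a :: field mat"
  assumes M: "M \<in> carrier_mat s s" and N: "N \<in> carrier_mat s s"
    and MN: "M * N = 1\<^sub>m s"
    and I: "I \<subseteq> {..<s}" and J: "J \<subseteq> {..<s}" and cIJ: "card I = card J"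
    and B: "invertible_mat (submatrix M ({..<s} - J) ({..<s} - I))"
  shows "det (submatrix N I J) \<noteq> 0"
proof
  define k where "k = card I"
  define I' where "I' = {..<s} - I"
  define J' where "J' = {..<s} - J"
  have fin: "finite I" "finite J" "finite I'" "finite J'" using I J finite_subset
    unfolding I'_def J'_def by auto
  have cI': "card I' = card J'" unfolding I'_def J'_def using I J cIJ fin
    by (simp add: card_Diff_subset)
  define t where "t = card I'"
  define A where "A = submatrix N I J"
  have "dim_row A = k" unfolding A_def dim_submatrix using N sub_card[OF I] k_def by simp
  moreover have "dim_col A = k" unfolding A_def dim_submatrix using N sub_card[OF J] cIJ k_def by simp
  ultimately have A: "A \<in> carrier_mat k k" by blast
  have Aix: "A $$ (a, b) = N $$ (pick I a, pick J b)" if "a < k" "b < k" for a b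
    unfolding A_def using that N sub_card[OF I] sub_card[OF J] cIJ k_def
    by (intro submatrix_index) auto
  define Bm where "Bm = submatrix M J' I'"
  have "dim_row Bm = t" unfolding Bm_def dim_submatrix using M sub_card[of J' s] cI' t_def
    unfolding J'_def by simp
  moreover have "dim_col Bm = t" unfolding Bm_def dim_submatrix using M sub_card[of I' s] t_def
    unfolding I'_def by simp
  ultimately have Bc: "Bm \<in> carrier_mat t t" by blast
  have Bix: "Bm $$ (a, b) = M $$ (pick J' a, pick I' b)" if "a < t" "b < t" for a b
    unfolding Bm_def using that M sub_card[of J' s] sub_card[of I' s] cI' t_def
    unfolding I'_def J'_def by (intro submatrix_index) auto
  assume "det A = 0"
  then obtain v where v: "v \<in> carrier_vec k" "v \<noteq> 0\<^sub>v k" "A *\<^sub>v v = 0\<^sub>v k"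
    using det_0_iff_vec_prod_zero_field[OF A] by auto
  define x where "x = vec s (\<lambda>j. if j \<in> J then v $ (card {a\<in>J. a<j}) else 0)"
  have xc: "x \<in> carrier_vec s" unfolding x_def by simp
  define y where "y = N *\<^sub>v x"
  have yc: "y \<in> carrier_vec s" unfolding y_def using N by (metis carrier_matD(1) carrier_vecI dim_mult_mat_vec)
  have pickJ: "pick J c \<in> J" "pick J c < s" if "c < k" for c
    using that pick_in_set[of c J] cIJ k_def J by auto
  have pickI: "pick I c \<in> I" "pick I c < s" if "c < k" for c
    using that pick_in_set[of c I] k_def I by auto
  have yI: "y $ pick I a = 0" if a: "a < k" for a
  proof -
    have "y $ pick I a = (\<Sum>j\<in>{0..<s}. N $$ (pick I a, j) * x $ j)"
      unfolding y_def using N pickI[OF a] xc by (simp add: scalar_prod_def)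
    also have "\<dots> = (\<Sum>j\<in>J. N $$ (pick I a, j) * v $ (card {b\<in>J. b<j}))"
      using J by (intro sum.mono_neutral_cong_right) (auto simp: x_def)
    also have "\<dots> = (\<Sum>c<k. N $$ (pick I a, pick J c) * v $ c)"
      using sum_pick[OF fin(2), of "\<lambda>j. N $$ (pick I a, j) * v $ (card {b\<in>J. b<j})"]
        card_pick[of _ J] cIJ k_def by simp
    also have "\<dots> = (\<Sum>c<k. A $$ (a, c) * v $ c)" using a Aix by simp
    also have "\<dots> = (A *\<^sub>v v) $ a" using A v(1) a by (simp add: scalar_prod_def atLeast0LessThan)
    finally show ?thesis using v a by simp
  qed
  have yI2: "y $ i = 0" if "i \<in> I" for i
    using yI[of "card {b\<in>I. b<i}"] pick_card_in_set[OF that] idx_lt[OF fin(1) that] k_def by simp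
  have Mx: "M *\<^sub>v y = x" unfolding y_def
    using assoc_mult_mat_vec[OF M N xc] MN xc by simp
  have "x \<noteq> 0\<^sub>v s"
  proof
    assume x0: "x = 0\<^sub>v s"
    from v obtain c where c: "c < k" "v $ c \<noteq> 0" by (metis eq_vecI carrier_vecD index_zero_vec(1) index_zero_vec(2))
    have "x $ pick J c = v $ c" unfolding x_def using pickJ[OF c(1)] card_pick[of c J] c cIJ k_def by simp
    thus False using x0 c pickJ[OF c(1)] by simp
  qed
  hence "y \<noteq> 0\<^sub>v s" using Mx M by auto
  then obtain i where i: "i < s" "y $ i \<noteq> 0" using yc by (metis eq_vecI carrier_vecD index_zero_vec(1) index_zero_vec(2))
  have iI': "i \<in> I'" unfolding I'_def using i yI2 by auto
  define w where "w = vec t (\<lambda>c. y $ pick I' c)"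
  have wc: "w \<in> carrier_vec t" unfolding w_def by simp
  have "w \<noteq> 0\<^sub>v t"
  proof
    assume "w = 0\<^sub>v t"
    hence "w $ card {b\<in>I'. b<i} = 0" using idx_lt[OF fin(3) iI'] t_def by simp
    thus False using pick_card_in_set[OF iI'] idx_lt[OF fin(3) iI'] t_def i unfolding w_def by simp
  qed
  moreover have "Bm *\<^sub>v w = 0\<^sub>v t"
  proof (rule eq_vecI)
    show "dim_vec (Bm *\<^sub>v w) = dim_vec (0\<^sub>v t)" using Bc by simp
    fix a assume "a < dim_vec (0\<^sub>v t)"
    hence a: "a < t" by simp
    have pa: "pick J' a \<in> J'" using pick_in_set[of a J'] a t_def cI' by auto
    have "(Bm *\<^sub>v w) $ a = (\<Sum>c<t. M $$ (pick J' a, pick I' c) * y $ pick I' c)"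
      using Bc a Bix by (simp add: scalar_prod_def atLeast0LessThan w_def)
    also have "\<dots> = (\<Sum>j\<in>I'. M $$ (pick J' a, j) * y $ j)"
      using sum_pick[OF fin(3), of "\<lambda>j. M $$ (pick J' a, j) * y $ j"] t_def by simp
    also have "\<dots> = (\<Sum>j\<in>{0..<s}. M $$ (pick J' a, j) * y $ j)"
      using yI2 by (intro sum.mono_neutral_cong_left) (auto simp: I'_def)
    also have "\<dots> = (M *\<^sub>v y) $ pick J' a" using M pa yc unfolding J'_def by (simp add: scalar_prod_def)
    also have "\<dots> = 0" using Mx pa unfolding x_def J'_def by simp
    finally show "(Bm *\<^sub>v w) $ a = 0\<^sub>v t $ a" using a by simp
  qed
  ultimately have "det Bm = 0" using det_0_iff_vec_prod_zero_field[OF Bc] wc by auto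
  moreover have "det Bm \<noteq> 0"
  proof -
    from B obtain X where X: "Bm * X = 1\<^sub>m (dim_row Bm)" "X * Bm = 1\<^sub>m (dim_row X)"
      unfolding Bm_def I'_def J'_def invertible_mat_def inverts_mat_def by blast
    have "dim_row X = t" using X(2) Bc
      by (metis carrier_matD(2) index_mult_mat(3) index_one_mat(3))
    moreover have "dim_col X = t" using X(1) Bc
      by (metis carrier_matD(1) index_mult_mat(3) index_mult_mat(2) index_one_mat(3) index_one_mat(2))
    ultimately have Xc: "X \<in> carrier_mat t t" by auto
    have "det Bm * det X = 1" using det_mult[OF Bc Xc] X(1) Bc by simp
    thus ?thesis by auto
  qed
  ultimately show False by simp
qed


theorem theorem2p24:
  fixes M Minv :: "'a :: {field, finite} mat" and s t :: nat
  assumes "t \<le> s"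
    and "M \<in> carrier_mat s s" and "Minv \<in> carrier_mat s s"
    and "M * Minv = 1\<^sub>m s" and "Minv * M = 1\<^sub>m s"
    and "linear_AONT t s M"
  shows "linear_AONT (s - t) s Minv"
proof -
  have AM: "\<forall>I J. I \<subseteq> {..<s} \<longrightarrow> J \<subseteq> {..<s} \<longrightarrow> card I = t \<longrightarrow> card J = t \<longrightarrow>
        invertible_mat (submatrix M I J)" using assms(6) unfolding linear_AONT_def by blast
  have dims: "dim_row Minv = s" "dim_col Minv = s" "dim_row M = s" using assms(2,3) by auto
  have invN: "invertible_mat Minv"
    unfolding invertible_mat_def inverts_mat_def square_mat.simps
  proof (intro conjI exI[of _ M])
    show "dim_col Minv = dim_row Minv" using dims by simp
    show "Minv * M = 1\<^sub>m (dim_row Minv)" using assms(5) dims by simp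
    show "M * Minv = 1\<^sub>m (dim_row M)" using assms(4) dims by simp
  qed
  have "invertible_mat (submatrix Minv I J)"
    if I: "I \<subseteq> {..<s}" and J: "J \<subseteq> {..<s}" and cI: "card I = s - t" and cJ: "card J = s - t" for I J
  proof -
    have cI': "card ({..<s} - I) = t" using I cI assms(1) by (simp add: card_Diff_subset finite_subset)
    have cJ': "card ({..<s} - J) = t" using J cJ assms(1) by (simp add: card_Diff_subset finite_subset)
    have B: "invertible_mat (submatrix M ({..<s} - J) ({..<s} - I))"
      using AM[rule_format, OF Diff_subset Diff_subset cJ' cI'] .
    have d: "det (submatrix Minv I J) \<noteq> 0"
      using key[OF assms(2,3,4) I J _ B] cI cJ by simp
    have "dim_row (submatrix Minv I J) = s - t" unfolding dim_submatrix using assms(3) sub_card[OF I] cI by simp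
    moreover have "dim_col (submatrix Minv I J) = s - t" unfolding dim_submatrix using assms(3) sub_card[OF J] cJ by simp
    ultimately have "submatrix Minv I J \<in> carrier_mat (s - t) (s - t)" by blast
    thus ?thesis using det_ne_invertible d by blast
  qed
  thus ?thesis unfolding linear_AONT_def using invN assms(3) by blast
qed

end
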